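(* Let $n\ge 5$ be an integer and let $\mathcal{H}$ be a Berge-$K_4$-saturated $3$-graph on $n$ vertices with the minimum number of hyperedges (among all such $3$-graphs on $n$ vertices). Suppose there is a vertex $v_1\in V(\mathcal{H})$ with $d_{\mathcal{H}}(v_1)=3$ such that every pair $(v_i,v_j)\in N^d_{\mathcal{H}}(v_1)$ is good and the pair $(v_1,v_k)$ is good for every $v_k\in N_{\mathcal{H}}(v_1)$. Then there exist four vertices $v_2,v_3,v_4,v_5$ such that $\mathcal{H}[\{v_1,v_2,v_3,v_4,v_5\}]$ contains a copy of $\mathcal{C}^3_5$.
   Context: A $3$-graph has all hyperedges of size $3$. A $3$-graph contains a Berge-$K_4$ if there are $4$ distinct vertices and $6$ distinct hyperedges, one containing each of the $6$ pairs of these vertices. $\mathcal{H}$ is Berge-$K_4$-saturated if it contains no Berge-$K_4$ but adding any $3$-set not already a hyperedge creates a Berge-$K_4$. For distinct vertices $u,v$, the pair $(u,v)$ is good if there exist distinct vertices $x,y\notin\{u,v\}$ and five distinct hyperedges of $\mathcal{H}$ containing respectively $\{u,x\},\{u,y\},\{v,x\},\{v,y\},\{x,y\}$; otherwise it is bad. $d_{\mathcal{H}}(v)$ is the number of hyperedges containing $v$; $N^d_{\mathcal{H}}(v)=\{(v_i,v_j): vv_iv_j\in E(\mathcal{H})\}$; $N_{\mathcal{H}}(v)$ is the set of vertices $w\neq v$ lying in a common hyperedge with $v$. $\mathcal{C}^3_5$ is the tight $3$-uniform $5$-cycle with vertices $w_1,\dots,w_5$ and hyperedges $w_iw_{i+1}w_{i+2}$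 ($i\in\{1,\dots,5\}$, indices mod $5$). *)

theory Defs
  imports Main
begin

definition three_graph :: "'a set \<Rightarrow> 'a set set \<Rightarrow> bool" where
  "three_graph V E \<longleftrightarrow> finite V \<and> (\<forall>e\<in>E. e \<subseteq> V \<and> card e = 3)"

definition berge_K4 :: "'a set set \<Rightarrow> bool" where
  "berge_K4 E \<longleftrightarrow> (\<exists>a b c d. distinct [a, b, c, d] \<and>
     (\<exists>f. inj_on f {{a,b},{a,c},{a,d},{b,c},{b,d},{c,d}} \<and>
          (\<forall>p\<in>{{a,b},{a,c},{a,d},{b,c},{b,d},{c,d}}. f p \<in> E \<and> p \<subseteq> f p)))"

definition berge_K4_saturated :: "'a set \<Rightarrow> 'a set set \<Rightarrow> bool" where
  "berge_K4_saturated V E \<longleftrightarrow> three_graph V E \<and> \<not> berge_K4 E \<and>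
     (\<forall>T. T \<subseteq> V \<and> card T = 3 \<and> T \<notin> E \<longrightarrow> berge_K4 (insert T E))"

definition good_pair :: "'a set set \<Rightarrow> 'a \<Rightarrow> 'a \<Rightarrow> bool" where
  "good_pair E u v \<longleftrightarrow> (\<exists>x y. distinct [u, v, x, y] \<and>
     (\<exists>e1 e2 e3 e4 e5. distinct [e1, e2, e3, e4, e5] \<and>
        e1 \<in> E \<and> e2 \<in> E \<and> e3 \<in> E \<and> e4 \<in> E \<and> e5 \<in> E \<and>
        {u, x} \<subseteq> e1 \<and> {u, y} \<subseteq> e2 \<and> {v, x} \<subseteq> e3 \<and> {v, y} \<subseteq> e4 \<and> {x, y} \<subseteq> e5))"

definition hdeg :: "'a set set \<Rightarrow> 'a \<Rightarrow> nat" where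
  "hdeg E v = card {e \<in> E. v \<in> e}"

definition link_pairs :: "'a set set \<Rightarrow> 'a \<Rightarrow> ('a \<times> 'a) set" where
  "link_pairs E v = {(x, y). {v, x, y} \<in> E}"

definition hneighbors :: "'a set set \<Rightarrow> 'a \<Rightarrow> 'a set" where
  "hneighbors E v = {w. w \<noteq> v \<and> (\<exists>e\<in>E. v \<in> e \<and> w \<in> e)}"

definition contains_C35 :: "'a set set \<Rightarrow> 'a set \<Rightarrow> bool" where
  "contains_C35 E S \<longleftrightarrow> (\<exists>w :: nat \<Rightarrow> 'a. inj_on w {0..<5} \<and> w ` {0..<5} \<subseteq> S \<and>
     (\<forall>i<5. {w i, w ((i + 1) mod 5), w ((i + 2) mod 5)} \<in> E))"

end

theory Submission
  imports Defs
begin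

lemma berge_intro:
  assumes d: "distinct [a,b,c,d]" and dE: "distinct [E1,E2,E3,E4,E5,E6]"
    and m: "E1\<in>E" "E2\<in>E" "E3\<in>E" "E4\<in>E" "E5\<in>E" "E6\<in>E"
    and s: "a\<in>E1" "b\<in>E1" "a\<in>E2" "c\<in>E2" "a\<in>E3" "d\<in>E3"
       "b\<in>E4" "c\<in>E4" "b\<in>E5" "d\<in>E5" "c\<in>E6" "d\<in>E6"
  shows "berge_K4 E"
proof -
  define f where "f = (\<lambda>p. if p={a,b} then E1 else if p={a,c} then E2 else if p={a,d} then E3
     else if p={b,c} then E4 else if p={b,d} then E5 else E6)"
  have ne: "{a,b}\<noteq>{a,c}" "{a,b}\<noteq>{a,d}" "{a,b}\<noteq>{b,c}" "{a,b}\<noteq>{b,d}" "{a,b}\<noteq>{c,d}"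
    "{a,c}\<noteq>{a,d}" "{a,c}\<noteq>{b,c}" "{a,c}\<noteq>{b,d}" "{a,c}\<noteq>{c,d}"
    "{a,d}\<noteq>{b,c}" "{a,d}\<noteq>{b,d}" "{a,d}\<noteq>{c,d}"
    "{b,c}\<noteq>{b,d}" "{b,c}\<noteq>{c,d}" "{b,d}\<noteq>{c,d}"
    using d by (auto simp: doubleton_eq_iff)
  have fv: "f {a,b} = E1" "f {a,c} = E2" "f {a,d} = E3" "f {b,c} = E4" "f {b,d} = E5" "f {c,d} = E6"
    using ne unfolding f_def by (simp_all add: ne[symmetric])
  have "distinct (map f [{a,b},{a,c},{a,d},{b,c},{b,d},{c,d}])" using dE by (simp add: fv)
  hence "inj_on f (set [{a,b},{a,c},{a,d},{b,c},{b,d},{c,d}])" by (simp only: distinct_map)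
  hence I: "inj_on f {{a,b},{a,c},{a,d},{b,c},{b,d},{c,d}}" by simp
  have P: "\<forall>p\<in>{{a,b},{a,c},{a,d},{b,c},{b,d},{c,d}}. f p \<in> E \<and> p \<subseteq> f p"
    using m s by (auto simp: fv)
  show ?thesis unfolding berge_K4_def
    apply (rule exI[of _ a], rule exI[of _ b], rule exI[of _ c], rule exI[of _ d])
    apply (rule conjI[OF d])
    apply (rule exI[of _ f])
    using I P by (rule conjI)
qed

lemma card3_eq:
  assumes "card e = 3" "a\<in>e" "b\<in>e" "c\<in>e" "distinct [a,b,c]"
  shows "e = {a,b,c}"
proof -
  have "finite e" using assms(1) by (metis card.infinite zero_neq_numeral)
  moreover have "{a,b,c} \<subseteq> e" using assms by auto
  moreover have "card {a,b,c} = 3" using assms(5) by auto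
  ultimately show ?thesis using assms(1) by (metis card_subset_eq)
qed

lemma card3_no4:
  assumes "card e = 3" "a\<in>e" "b\<in>e" "c\<in>e" "d\<in>e" "distinct [a,b,c,d]"
  shows False
proof -
  have "e = {a,b,c}" by (rule card3_eq) (use assms in auto)
  thus False using assms by auto
qed

lemma card3_split:
  assumes "card e = 3" "v\<in>e"
  shows "\<exists>p q. e = {v,p,q} \<and> distinct [v,p,q]"
proof -
  obtain x y z where e: "e = {x,y,z}" "x\<noteq>y" "y\<noteq>z" "x\<noteq>z" using assms(1) card_3_iff by metis
  show ?thesis using assms(2) e by (auto simp: insert_commute)
qed

lemma good_pairE:
  assumes "good_pair E u v"
  obtains x y e1 e2 e3 e4 e5 where "distinct [u,v,x,y]" "distinct [e1,e2,e3,e4,e5]"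
     "e1\<in>E" "e2\<in>E" "e3\<in>E" "e4\<in>E" "e5\<in>E"
     "u\<in>e1" "x\<in>e1" "u\<in>e2" "y\<in>e2" "v\<in>e3" "x\<in>e3" "v\<in>e4" "y\<in>e4" "x\<in>e5" "y\<in>e5"
  using assms unfolding good_pair_def
  apply (elim exE conjE)
  subgoal for x y e1 e2 e3 e4 e5
    by (rule that[of x y e1 e2 e3 e4 e5]) simp_all
  done

lemma L3:
  assumes nok: "\<not> berge_K4 E" and g: "good_pair E v k"
  obtains x y A B C D F where "distinct [v,k,x,y]" "distinct [A,B,C,D,F]"
     "A\<in>E" "B\<in>E" "C\<in>E" "D\<in>E" "F\<in>E"
     "v\<in>A" "x\<in>A" "v\<in>B" "y\<in>B" "k\<in>C" "x\<in>C" "k\<in>D" "y\<in>D" "x\<in>F" "y\<in>F"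
     "\<forall>G\<in>E. v\<in>G \<longrightarrow> k\<in>G \<longrightarrow> G\<in>{A,B,C,D,F}"
proof -
  obtain x y A B C D F where h: "distinct [v,k,x,y]" "distinct [A,B,C,D,F]"
     "A\<in>E" "B\<in>E" "C\<in>E" "D\<in>E" "F\<in>E"
     "v\<in>A" "x\<in>A" "v\<in>B" "y\<in>B" "k\<in>C" "x\<in>C" "k\<in>D" "y\<in>D" "x\<in>F" "y\<in>F"
    using g by (rule good_pairE)
  have G: "\<forall>G\<in>E. v\<in>G \<longrightarrow> k\<in>G \<longrightarrow> G\<in>{A,B,C,D,F}"
  proof (intro ballI impI, rule ccontr)
    fix G assume G: "G\<in>E" "v\<in>G" "k\<in>G" "G\<notin>{A,B,C,D,F}"
    have "distinct [G,A,B,C,D,F]" using G(4) h(2) by simp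
    have "berge_K4 E"
      by (rule berge_intro[of v k x y G A B C D F]) (use h G \<open>distinct [G,A,B,C,D,F]\<close> in simp_all)
    thus False using nok by simp
  qed
  show thesis by (rule that[of x y A B C D F]) (use h G in simp_all)
qed

lemma L2:
  assumes nok: "\<not> berge_K4 E" and g: "good_pair E p q" and e: "{v,p,q}\<in>E" and d: "distinct [v,p,q]"
  obtains y A B C F G where "y\<notin>{v,p,q}" "distinct [A,B,C]" "A\<in>E" "B\<in>E" "C\<in>E"
     "v\<in>A" "p\<in>A" "v\<in>B" "q\<in>B" "v\<in>C" "y\<in>C" "F\<in>E" "G\<in>E" "F\<noteq>G"
     "F\<notin>{A,B,C}" "G\<notin>{A,B,C}" "p\<in>F" "y\<in>F" "q\<in>G" "y\<in>G"
proof -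
  obtain x y e1 e2 e3 e4 e5 where h: "distinct [p,q,x,y]" "distinct [e1,e2,e3,e4,e5]"
     "e1\<in>E" "e2\<in>E" "e3\<in>E" "e4\<in>E" "e5\<in>E"
     "p\<in>e1" "x\<in>e1" "p\<in>e2" "y\<in>e2" "q\<in>e3" "x\<in>e3" "q\<in>e4" "y\<in>e4" "x\<in>e5" "y\<in>e5"
    using g by (rule good_pairE)
  consider "x = v" | "y = v" | "x\<noteq>v" "y\<noteq>v" by blast
  thus thesis
  proof cases
    case 1
    show thesis by (rule that[of y e1 e3 e5 e2 e4]) (use h d 1 in auto)
  next
    case 2
    show thesis by (rule that[of x e2 e4 e5 e1 e3]) (use h d 2 in auto)
  next
    case 3
    have xy: "x\<notin>{v,p,q}" "y\<notin>{v,p,q}" using h(1) 3 by auto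
    have ne: "{v,p,q}\<noteq>e1" "{v,p,q}\<noteq>e2" "{v,p,q}\<noteq>e3" "{v,p,q}\<noteq>e4" "{v,p,q}\<noteq>e5"
      using xy h by blast+
    have "berge_K4 E"
      by (rule berge_intro[of p q x y "{v,p,q}" e1 e2 e3 e4 e5]) (use h ne e in simp_all)
    thus thesis using nok by simp
  qed
qed

lemma L2n:
  assumes nok: "\<not> berge_K4 E" and g: "good_pair E p q" and e: "{v,p,q}\<in>E" and d: "distinct [v,p,q]"
    and vE: "\<forall>e\<in>E. v\<in>e \<longrightarrow> e=X \<or> e=Y \<or> e=Z"
  obtains y C F G where "y\<notin>{v,p,q}" "C\<in>{X,Y,Z}" "y\<in>C" "F\<in>E" "G\<in>E" "F\<noteq>G"
     "v\<notin>F" "v\<notin>G" "p\<in>F" "y\<in>F" "q\<in>G" "y\<in>G"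
proof -
  obtain y A B C F G where h: "y\<notin>{v,p,q}" "distinct [A,B,C]" "A\<in>E" "B\<in>E" "C\<in>E"
     "v\<in>A" "p\<in>A" "v\<in>B" "q\<in>B" "v\<in>C" "y\<in>C" "F\<in>E" "G\<in>E" "F\<noteq>G"
     "F\<notin>{A,B,C}" "G\<notin>{A,B,C}" "p\<in>F" "y\<in>F" "q\<in>G" "y\<in>G"
    by (rule L2[OF nok g e d])
  have ABC: "A\<in>{X,Y,Z}" "B\<in>{X,Y,Z}" "C\<in>{X,Y,Z}" using vE h by auto
  have nF: "v\<notin>F"
  proof
    assume "v\<in>F"
    hence "F\<in>{X,Y,Z}" using vE h by auto
    thus False using ABC h(2,15) by auto
  qed
  have nG: "v\<notin>G"
  proof
    assume "v\<in>G"
    hence "G\<in>{X,Y,Z}" using vE h by auto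
    thus False using ABC h(2,16) by auto
  qed
  show thesis by (rule that[of y C F G]) (use h ABC nF nG in simp_all)
qed

lemma NoIso:
  assumes nok: "\<not> berge_K4 E" and g: "good_pair E p q" and e: "{v,p,q}\<in>E" and d: "distinct [v,p,q]"
  shows "\<exists>A B. A\<in>E \<and> B\<in>E \<and> A\<noteq>B \<and> v\<in>A \<and> p\<in>A \<and> v\<in>B \<and> q\<in>B"
proof -
  obtain y A B C F G where h: "y\<notin>{v,p,q}" "distinct [A,B,C]" "A\<in>E" "B\<in>E" "C\<in>E"
     "v\<in>A" "p\<in>A" "v\<in>B" "q\<in>B" "v\<in>C" "y\<in>C" "F\<in>E" "G\<in>E" "F\<noteq>G"
     "F\<notin>{A,B,C}" "G\<notin>{A,B,C}" "p\<in>F" "y\<in>F" "q\<in>G" "y\<in>G"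
    by (rule L2[OF nok g e d])
  show ?thesis
    apply (rule exI[of _ A], rule exI[of _ B])
    using h by simp
qed

lemma NoStar:
  assumes nok: "\<not> berge_K4 E" and c3: "\<forall>e\<in>E. card e = 3" and g: "good_pair E v a"
    and W: "W1\<in>E" "W2\<in>E" "W3\<in>E" "distinct [W1,W2,W3]" "v\<in>W1" "v\<in>W2" "v\<in>W3"
    and all: "\<forall>e\<in>E. v\<in>e \<longrightarrow> a\<in>e"
  shows False
proof -
  obtain x y A B C D F where h: "distinct [v,a,x,y]" "distinct [A,B,C,D,F]"
     "A\<in>E" "B\<in>E" "C\<in>E" "D\<in>E" "F\<in>E"
     "v\<in>A" "x\<in>A" "v\<in>B" "y\<in>B" "a\<in>C" "x\<in>C" "a\<in>D" "y\<in>D" "x\<in>F" "y\<in>F"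
     and cov: "\<forall>G\<in>E. v\<in>G \<longrightarrow> a\<in>G \<longrightarrow> G\<in>{A,B,C,D,F}"
    by (rule L3[OF nok g])
  have aA: "a\<in>A" "a\<in>B" using all h by auto
  obtain W where W': "W\<in>E" "v\<in>W" "W\<noteq>A" "W\<noteq>B" using W by auto
  have aW: "a\<in>W" using all W' by auto
  have "W\<in>{C,D,F}" using cov W' aW by auto
  moreover have "W\<noteq>C"
  proof
    assume "W = C"
    hence "W = {v,a,x}" using card3_eq[of W v a x] c3 W' aW h by auto
    moreover have "A = {v,a,x}" using card3_eq[of A v a x] c3 h aA by auto
    ultimately show False using W' by simp
  qed
  moreover have "W\<noteq>D"
  proof
    assume "W = D"
    hence "W = {v,a,y}" using card3_eq[of W v a y] c3 W' aW h by auto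
    moreover have "B = {v,a,y}" using card3_eq[of B v a y] c3 h aA by auto
    ultimately show False using W' by simp
  qed
  moreover have "W\<noteq>F"
  proof
    assume "W = F"
    thus False using card3_no4[of W v a x y] c3 W' aW h by auto
  qed
  ultimately show False by auto
qed

lemma NoTri:
  assumes nok: "\<not> berge_K4 E" and c3: "\<forall>e\<in>E. card e = 3"
    and vE: "\<forall>e\<in>E. v\<in>e \<longrightarrow> e={v,a,b} \<or> e={v,b,c} \<or> e={v,a,c}"
    and m: "{v,a,b}\<in>E" "{v,b,c}\<in>E" "{v,a,c}\<in>E" and d: "distinct [v,a,b,c]"
    and gab: "good_pair E a b" and gbc: "good_pair E b c" and gac: "good_pair E a c"
  shows False
proof -
  have T: "X = {a,b,c}" if "X\<in>E" "a\<in>X" "b\<in>X" "c\<in>X" for X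
    using card3_eq[of X a b c] c3 that d by auto
  obtain y1 C1 F1 G1 where h1: "y1\<notin>{v,a,b}" "C1\<in>{{v,a,b},{v,b,c},{v,a,c}}" "y1\<in>C1" "F1\<in>E" "G1\<in>E" "F1\<noteq>G1"
     "v\<notin>F1" "v\<notin>G1" "a\<in>F1" "y1\<in>F1" "b\<in>G1" "y1\<in>G1"
    by (rule L2n[OF nok gab m(1) _ vE]) (use d in simp_all)
  have y1: "y1 = c" using h1(1-3) by auto
  have vbc: "{v,b,c} = {v,c,b}" by auto
  obtain y2 C2 F2 G2 where h2: "y2\<notin>{v,b,c}" "C2\<in>{{v,a,b},{v,b,c},{v,a,c}}" "y2\<in>C2" "F2\<in>E" "G2\<in>E" "F2\<noteq>G2"
     "v\<notin>F2" "v\<notin>G2" "b\<in>F2" "y2\<in>F2" "c\<in>G2" "y2\<in>G2"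
    by (rule L2n[OF nok gbc m(2) _ vE]) (use d in simp_all)
  have y2: "y2 = a" using h2(1-3) by auto
  obtain y3 C3 F3 G3 where h3: "y3\<notin>{v,a,c}" "C3\<in>{{v,a,b},{v,b,c},{v,a,c}}" "y3\<in>C3" "F3\<in>E" "G3\<in>E" "F3\<noteq>G3"
     "v\<notin>F3" "v\<notin>G3" "a\<in>F3" "y3\<in>F3" "c\<in>G3" "y3\<in>G3"
    by (rule L2n[OF nok gac m(3) _ vE]) (use d in simp_all)
  have y3: "y3 = b" using h3(1-3) by auto
  note hh = h1 h2 h3 y1 y2 y3
  have vne: "{v,a,b} \<noteq> {v,b,c}" "{v,a,b} \<noteq> {v,a,c}" "{v,b,c} \<noteq> {v,a,c}" using d by (auto simp: insert_commute doubleton_eq_iff)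
  have B: "berge_K4 E" if "X\<in>E" "Y\<in>E" "Z\<in>E" "v\<notin>X" "v\<notin>Y" "v\<notin>Z" "distinct [X,Y,Z]"
     "a\<in>X" "b\<in>X" "a\<in>Y" "c\<in>Y" "b\<in>Z" "c\<in>Z" for X Y Z
    by (rule berge_intro[of v a b c "{v,a,b}" "{v,b,c}" "{v,a,c}" X Y Z]) (use that m vne d in auto)
  show False
  proof (cases "F2 = F1 \<or> F2 = G1")
    case False
    thus False using B[of F2 F1 G1] hh nok by auto
  next
    case True
    then consider "F2 = F1" | "F2 = G1" by blast
    thus False
    proof cases
      case 1
      have "G2 \<noteq> G1"
      proof
        assume "G2 = G1"
        hence "G1 = {a,b,c}" "F1 = {a,b,c}" using T[of G1] T[of F1] hh 1 by auto
        thus False using hh by simp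
      qed
      thus False using B[of F1 G2 G1] hh nok 1 by auto
    next
      case 2
      hence G1T: "G1 = {a,b,c}" using T[of G1] hh by auto
      show False
      proof (cases "G3 = G1")
        case False
        have "G3 \<noteq> F1"
        proof
          assume "G3 = F1"
          hence "F1 = {a,b,c}" using T[of F1] hh by auto
          thus False using hh G1T by simp
        qed
        thus False using B[of G1 F1 G3] hh nok False G1T by auto
      next
        case True
        have "F3 \<noteq> F1"
        proof
          assume "F3 = F1"
          hence "F1 = {a,b,c}" using T[of F1] hh by auto
          thus False using hh G1T by simp
        qed
        moreover have "F3 \<noteq> G1" using True hh by auto
        ultimately show False using B[of F3 F1 G1] hh nok G1T by auto
      qed
    qed
  qed
qed

lemma pick3: "B={v,a,b} \<or> B={v,b,c} \<or> B={v,c,d} \<Longrightarrow> y\<in>B \<Longrightarrow> y\<noteq>v \<Longrightarrow> y\<noteq>b \<Longrightarrow> y=a \<or> y=c \<or> y=d"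
  by auto

lemma not3: "X={v,a,b} \<or> X={v,b,c} \<or> X={v,c,d} \<Longrightarrow> a\<in>X \<Longrightarrow> c\<in>X \<Longrightarrow> distinct [v,a,b,c,d] \<Longrightarrow> False"
  by auto

lemma only_a: "X={v,a,b} \<or> X={v,b,c} \<or> X={v,c,d} \<Longrightarrow> a\<in>X \<Longrightarrow> distinct [v,a,b,c,d] \<Longrightarrow> X = {v,a,b}"
  by auto

lemma only_d: "X={v,a,b} \<or> X={v,b,c} \<or> X={v,c,d} \<Longrightarrow> d\<in>X \<Longrightarrow> distinct [v,a,b,c,d] \<Longrightarrow> X = {v,c,d}"
  by auto

lemma P4_side:
  assumes nok: "\<not> berge_K4 E"
    and vE: "\<forall>e\<in>E. v\<in>e \<longrightarrow> e={v,a,b} \<or> e={v,b,c} \<or> e={v,c,d}"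
    and m: "{v,a,b}\<in>E" "{v,b,c}\<in>E" and dist: "distinct [v,a,b,c,d]"
    and g: "good_pair E v b"
  obtains C F where "C\<in>E" "F\<in>E" "C\<noteq>F" "v\<notin>C" "v\<notin>F" "a\<in>C" "b\<in>C" "a\<in>F" "c\<in>F"
proof -
  obtain x y A B C D F where h: "distinct [v,b,x,y]" "distinct [A,B,C,D,F]"
     "A\<in>E" "B\<in>E" "C\<in>E" "D\<in>E" "F\<in>E"
     "v\<in>A" "x\<in>A" "v\<in>B" "y\<in>B" "b\<in>C" "x\<in>C" "b\<in>D" "y\<in>D" "x\<in>F" "y\<in>F"
     and cov: "\<forall>G\<in>E. v\<in>G \<longrightarrow> b\<in>G \<longrightarrow> G\<in>{A,B,C,D,F}"
    by (rule L3[OF nok g])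
  have c1: "{v,a,b}\<in>{A,B,C,D,F}" "{v,b,c}\<in>{A,B,C,D,F}"
    using bspec[OF cov m(1)] bspec[OF cov m(2)] by simp_all
  have A3: "A={v,a,b} \<or> A={v,b,c} \<or> A={v,c,d}" using bspec[OF vE h(3)] h(8) by (rule mp)
  have B3: "B={v,a,b} \<or> B={v,b,c} \<or> B={v,c,d}" using bspec[OF vE h(4)] h(10) by (rule mp)
  have dx: "x\<noteq>v" "x\<noteq>b" "y\<noteq>v" "y\<noteq>b" "x\<noteq>y" using h(1) by auto
  have x3: "x=a \<or> x=c \<or> x=d" by (rule pick3[OF A3 h(9) dx(1,2)])
  have y3: "y=a \<or> y=c \<or> y=d" by (rule pick3[OF B3 h(11) dx(3,4)])
  have dd: "v\<noteq>a" "v\<noteq>b" "v\<noteq>c" "v\<noteq>d" "a\<noteq>b" "a\<noteq>c" "a\<noteq>d" "b\<noteq>c" "b\<noteq>d" "c\<noteq>d"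
    using dist by auto
  have nva: "v\<notin>X" if "X\<in>E" "a\<in>X" "c\<in>X" for X
  proof
    assume "v\<in>X"
    have "X={v,a,b} \<or> X={v,b,c} \<or> X={v,c,d}" using bspec[OF vE that(1)] \<open>v\<in>X\<close> by (rule mp)
    thus False by (rule not3[OF _ that(2,3) dist])
  qed
  consider "x=a" "y=c" | "x=c" "y=a" | "x=a" "y=d" | "x=d" "y=a" | "x=c" "y=d" | "x=d" "y=c"
    using x3 y3 dx by blast
  thus thesis
  proof cases
    case 1
    have Aa: "A = {v,a,b}" using only_a[OF A3 _ dist] h(9) 1 by simp
    have "v\<notin>C"
    proof
      assume "v\<in>C"
      hence "C={v,a,b} \<or> C={v,b,c} \<or> C={v,c,d}" using bspec[OF vE h(5)] by (rule rev_mp)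
      hence "C = {v,a,b}" using only_a[OF _ _ dist] h(13) 1 by simp
      thus False using Aa h(2) by simp
    qed
    moreover have "v\<notin>F" using nva[of F] h(7,16,17) 1 by simp
    moreover have "C\<noteq>F" using h(2) by simp
    ultimately show thesis using that[of C F] h(5,7,12,13,16,17) 1 by simp
  next
    case 2
    have Ba: "B = {v,a,b}" using only_a[OF B3 _ dist] h(11) 2 by simp
    have "v\<notin>D"
    proof
      assume "v\<in>D"
      hence "D={v,a,b} \<or> D={v,b,c} \<or> D={v,c,d}" using bspec[OF vE h(6)] by (rule rev_mp)
      hence "D = {v,a,b}" using only_a[OF _ _ dist] h(15) 2 by simp
      thus False using Ba h(2) by simp
    qed
    moreover have "v\<notin>F" using nva[of F] h(7,16,17) 2 by simp
    moreover have "D\<noteq>F" using h(2) by simp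
    ultimately show thesis using that[of D F] h(6,7,14,15,16,17) 2 by simp
  next
    case 3
    have AB: "A = {v,a,b}" "B = {v,c,d}" using only_a[OF A3 _ dist] only_d[OF B3 _ dist] h(9,11) 3 by simp_all
    have "{v,b,c} \<noteq> A" "{v,b,c} \<noteq> B" using AB dd by (auto simp: doubleton_eq_iff)
    moreover have "{v,b,c} \<noteq> C" "{v,b,c} \<noteq> D" "{v,b,c} \<noteq> F" using h(13,15,16) 3 dd by auto
    ultimately show thesis using c1(2) by simp
  next
    case 4
    have AB: "A = {v,c,d}" "B = {v,a,b}" using only_d[OF A3 _ dist] only_a[OF B3 _ dist] h(9,11) 4 by simp_all
    have "{v,b,c} \<noteq> A" "{v,b,c} \<noteq> B" using AB dd by (auto simp: doubleton_eq_iff)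
    moreover have "{v,b,c} \<noteq> C" "{v,b,c} \<noteq> D" "{v,b,c} \<noteq> F" using h(13,15,16) 4 dd by auto
    ultimately show thesis using c1(2) by simp
  next
    case 5
    have "{v,a,b} \<noteq> X" if "c\<in>X \<or> d\<in>X" for X using that dd by auto
    hence "{v,a,b} \<notin> {A,B,C,D,F}" using h(9,11,13,15,16) 5 by auto
    thus thesis using c1(1) by simp
  next
    case 6
    have "{v,a,b} \<noteq> X" if "c\<in>X \<or> d\<in>X" for X using that dd by auto
    hence "{v,a,b} \<notin> {A,B,C,D,F}" using h(9,11,13,15,16) 6 by auto
    thus thesis using c1(1) by simp
  qed
qed

lemma berge_v:
  assumes "distinct [v,p,q,r]" "distinct [V1,V2,V3]" "V1\<in>E" "V2\<in>E" "V3\<in>E"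
    "v\<in>V1" "p\<in>V1" "v\<in>V2" "q\<in>V2" "v\<in>V3" "r\<in>V3"
    "X\<in>E" "Y\<in>E" "Z\<in>E" "v\<notin>X" "v\<notin>Y" "v\<notin>Z" "distinct [X,Y,Z]"
    "p\<in>X" "q\<in>X" "p\<in>Y" "r\<in>Y" "q\<in>Z" "r\<in>Z"
  shows "berge_K4 E"
proof -
  have dd: "distinct [V1,V2,V3,X,Y,Z]" using assms by auto
  show ?thesis by (rule berge_intro[of v p q r V1 V2 V3 X Y Z]) (use assms dd in simp_all)
qed

lemma C5:
  assumes "{v,a,b}\<in>E" "{v,b,c}\<in>E" "{v,c,d}\<in>E" "{a,b,d}\<in>E" "{a,c,d}\<in>E" "distinct [v,a,b,c,d]"
  shows "contains_C35 E {v,b,a,d,c}"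
proof -
  let ?w = "\<lambda>i. [v,b,a,d,c] ! i"
  have "distinct [v,b,a,d,c]" using assms(6) by auto
  hence inj: "inj_on ?w {0..<5}" by (intro inj_on_nth) auto
  have img: "?w ` {0..<5} \<subseteq> {v,b,a,d,c}"
  proof
    fix z assume "z \<in> ?w ` {0..<5}"
    then obtain i where "i<5" "z = ?w i" by auto
    thus "z \<in> {v,b,a,d,c}" by (auto simp: less_Suc_eq numeral_eq_Suc)
  qed
  have e: "{?w i, ?w ((i + 1) mod 5), ?w ((i + 2) mod 5)} \<in> E" if "i<5" for i
  proof -
    have "i=0 \<or> i=1 \<or> i=2 \<or> i=3 \<or> i=4" using that by auto
    thus ?thesis using assms(1-5) by (auto simp: insert_commute)
  qed
  show ?thesis unfolding contains_C35_def using inj img e by blast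
qed

lemma P4:
  assumes nok: "\<not> berge_K4 E" and c3: "\<forall>e\<in>E. card e = 3"
    and vE: "\<forall>e\<in>E. v\<in>e \<longrightarrow> e={v,a,b} \<or> e={v,b,c} \<or> e={v,c,d}"
    and m: "{v,a,b}\<in>E" "{v,b,c}\<in>E" "{v,c,d}\<in>E" and dist: "distinct [v,a,b,c,d]"
    and gab: "good_pair E a b" and gvb: "good_pair E v b" and gvc: "good_pair E v c"
  shows "{a,b,d}\<in>E \<and> {a,c,d}\<in>E"
proof -
  obtain C1 F1 where s1: "C1\<in>E" "F1\<in>E" "C1\<noteq>F1" "v\<notin>C1" "v\<notin>F1" "a\<in>C1" "b\<in>C1" "a\<in>F1" "c\<in>F1"
    by (rule P4_side[OF nok vE m(1,2) dist gvb])
  have eqs: "{v,d,c}={v,c,d}" "{v,c,b}={v,b,c}" "{v,b,a}={v,a,b}" by auto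
  have vE': "\<forall>e\<in>E. v\<in>e \<longrightarrow> e={v,d,c} \<or> e={v,c,b} \<or> e={v,b,a}"
  proof (intro ballI impI)
    fix e assume "e\<in>E" "v\<in>e"
    hence "e={v,a,b} \<or> e={v,b,c} \<or> e={v,c,d}" using vE by blast
    thus "e={v,d,c} \<or> e={v,c,b} \<or> e={v,b,a}" unfolding eqs by (elim disjE) simp_all
  qed
  have m2: "{v,d,c}\<in>E" "{v,c,b}\<in>E" using m unfolding eqs by simp_all
  have dist': "distinct [v,d,c,b,a]" using dist by auto
  obtain C2 F2 where s2: "C2\<in>E" "F2\<in>E" "C2\<noteq>F2" "v\<notin>C2" "v\<notin>F2" "d\<in>C2" "c\<in>C2" "d\<in>F2" "b\<in>F2"
    by (rule P4_side[OF nok vE' m2 dist' gvc])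
  have dvab: "distinct [v,a,b]" using dist by simp
  obtain y Cy Fy Gy where l: "y\<notin>{v,a,b}" "Cy\<in>{{v,a,b},{v,b,c},{v,c,d}}" "y\<in>Cy" "Fy\<in>E" "Gy\<in>E" "Fy\<noteq>Gy"
     "v\<notin>Fy" "v\<notin>Gy" "a\<in>Fy" "y\<in>Fy" "b\<in>Gy" "y\<in>Gy"
    by (rule L2n[OF nok gab m(1) dvab vE])
  have y: "y = c \<or> y = d" using l(1-3) by auto
  have vne: "distinct [{v,a,b},{v,b,c},{v,c,d}]"
  proof -
    have "a\<notin>{v,b,c}" "a\<notin>{v,c,d}" "b\<notin>{v,c,d}" using dist by auto
    thus ?thesis by auto
  qed
  have vin: "v\<in>{v,a,b}" "a\<in>{v,a,b}" "b\<in>{v,a,b}" "v\<in>{v,b,c}" "b\<in>{v,b,c}" "c\<in>{v,b,c}"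
     "v\<in>{v,c,d}" "c\<in>{v,c,d}" "d\<in>{v,c,d}" by simp_all
  have T: "X = {p,q,r}" if "X\<in>E" "p\<in>X" "q\<in>X" "r\<in>X" "distinct [p,q,r]" for X p q r
    using card3_eq[of X p q r] c3 that by blast
  from y show ?thesis
  proof
    assume yc: "y = c"
    show ?thesis
    proof (cases "{b,c,d}\<in>E")
      case True
      have "a\<notin>{b,c,d}" "v\<notin>{b,c,d}" using dist by auto
      hence "berge_K4 E"
        using berge_v[of v a b c "{v,a,b}" "{v,b,c}" "{v,c,d}" E C1 F1 "{b,c,d}"] vne m vin s1 True dist
        by auto
      thus ?thesis using nok by simp
    next
      case False
      have "Gy \<noteq> F2" "Gy \<noteq> C2" "F2 \<noteq> C2"
        using T[of Gy b c d] T[of F2 b c d] T[of C2 b c d] False l s2 yc dist by auto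
      hence "berge_K4 E"
        using berge_v[of v b c d "{v,a,b}" "{v,b,c}" "{v,c,d}" E Gy F2 C2] vne m vin s2 l yc dist
        by auto
      thus ?thesis using nok by simp
    qed
  next
    assume yd: "y = d"
    have acd: "{a,c,d}\<in>E"
    proof (rule ccontr)
      assume N: "{a,c,d}\<notin>E"
      have "F1 \<noteq> Fy" "F1 \<noteq> C2" "Fy \<noteq> C2"
        using T[of F1 a c d] T[of Fy a c d] T[of C2 a c d] N l s1 s2 yd dist by auto
      hence "berge_K4 E"
        using berge_v[of v a c d "{v,a,b}" "{v,b,c}" "{v,c,d}" E F1 Fy C2] vne m vin s1 s2 l yd dist
        by auto
      thus False using nok by simp
    qed
    have abd: "{a,b,d}\<in>E"
    proof (rule ccontr)
      assume N: "{a,b,d}\<notin>E"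
      have "C1 \<noteq> Fy" "C1 \<noteq> Gy" "Fy \<noteq> Gy"
        using T[of C1 a b d] T[of Fy a b d] T[of Gy a b d] N l s1 yd dist by auto
      hence "berge_K4 E"
        using berge_v[of v a b d "{v,a,b}" "{v,b,c}" "{v,c,d}" E C1 Fy Gy] vne m vin s1 l yd dist
        by auto
      thus False using nok by simp
    qed
    show ?thesis using acd abd by simp
  qed
qed

lemma vE_conv:
  assumes "\<forall>e\<in>E. v\<in>e \<longrightarrow> e=X1 \<or> e=X2 \<or> e=X3" "{X1,X2,X3} = {Y1,Y2,Y3}"
  shows "\<forall>e\<in>E. v\<in>e \<longrightarrow> e=Y1 \<or> e=Y2 \<or> e=Y3"
proof (intro ballI impI)
  fix e assume "e\<in>E" "v\<in>e"
  hence "e\<in>{X1,X2,X3}" using assms(1) by simp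
  hence "e\<in>{Y1,Y2,Y3}" using assms(2) by simp
  thus "e=Y1 \<or> e=Y2 \<or> e=Y3" by simp
qed

lemma core3:
  assumes nok: "\<not> berge_K4 E" and c3: "\<forall>e\<in>E. card e = 3"
    and vE: "\<forall>e\<in>E. v\<in>e \<longrightarrow> e=e1 \<or> e=e2 \<or> e=e3" and m: "e1\<in>E" "e2\<in>E" "e3\<in>E"
    and goodL: "\<forall>p q. {v,p,q}\<in>E \<longrightarrow> good_pair E p q"
    and goodN: "\<forall>k. k\<noteq>v \<and> (\<exists>e\<in>E. v\<in>e \<and> k\<in>e) \<longrightarrow> good_pair E v k"
    and e1: "e1 = {v,p,q}" and e2: "e2 = {v,q,r}" and e3: "e3 = {v,s,t}"
    and d: "distinct [v,p,q,r]" "distinct [v,s,t]" "t\<noteq>q" and s: "s = p \<or> s = r"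
  shows "\<exists>v2 v3 v4 v5. contains_C35 E {v,v2,v3,v4,v5}"
proof -
  have gN: "good_pair E v k" if "k\<noteq>v" "X\<in>E" "v\<in>X" "k\<in>X" for k X
    using goodN that by blast
  have gL: "good_pair E x y" if "{v,x,y}\<in>E" for x y using goodL that by blast
  from s show ?thesis
  proof
    assume sp: "s = p"
    show ?thesis
    proof (cases "t = r")
      case True
      have vE': "\<forall>e\<in>E. v\<in>e \<longrightarrow> e={v,p,q} \<or> e={v,q,r} \<or> e={v,p,r}"
        by (rule vE_conv[OF vE]) (simp add: e1 e2 e3 sp True)
      have m': "{v,p,q}\<in>E" "{v,q,r}\<in>E" "{v,p,r}\<in>E" using m e1 e2 e3 sp True by simp_all
      have False
        by (rule NoTri[OF nok c3 vE' m' d(1) gL[OF m'(1)] gL[OF m'(2)] gL[OF m'(3)]])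
      thus ?thesis by simp
    next
      case False
      have dd: "distinct [v,t,p,q,r]" using d False sp by auto
      have vE': "\<forall>e\<in>E. v\<in>e \<longrightarrow> e={v,t,p} \<or> e={v,p,q} \<or> e={v,q,r}"
        by (rule vE_conv[OF vE]) (simp add: e1 e2 e3 sp insert_commute)
      have m': "{v,t,p}\<in>E" "{v,p,q}\<in>E" "{v,q,r}\<in>E" using m e1 e2 e3 sp by (simp_all add: insert_commute)
      have "{t,p,r}\<in>E \<and> {t,q,r}\<in>E"
        by (rule P4[OF nok c3 vE' m' dd gL[OF m'(1)] gN[OF _ m'(2)] gN[OF _ m'(2)]]) (use dd in auto)
      hence "contains_C35 E {v,p,t,r,q}" using C5[OF m'] dd by simp
      thus ?thesis by blast
    qed
  next
    assume sr: "s = r"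
    show ?thesis
    proof (cases "t = p")
      case True
      have vE': "\<forall>e\<in>E. v\<in>e \<longrightarrow> e={v,p,q} \<or> e={v,q,r} \<or> e={v,p,r}"
        by (rule vE_conv[OF vE]) (simp add: e1 e2 e3 sr True insert_commute)
      have m': "{v,p,q}\<in>E" "{v,q,r}\<in>E" "{v,p,r}\<in>E" using m e1 e2 e3 sr True by (simp_all add: insert_commute)
      have False
        by (rule NoTri[OF nok c3 vE' m' d(1) gL[OF m'(1)] gL[OF m'(2)] gL[OF m'(3)]])
      thus ?thesis by simp
    next
      case False
      have dd: "distinct [v,p,q,r,t]" using d False sr by auto
      have vE': "\<forall>e\<in>E. v\<in>e \<longrightarrow> e={v,p,q} \<or> e={v,q,r} \<or> e={v,r,t}"
        by (rule vE_conv[OF vE]) (simp add: e1 e2 e3 sr)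
      have m': "{v,p,q}\<in>E" "{v,q,r}\<in>E" "{v,r,t}\<in>E" using m e1 e2 e3 sr by simp_all
      have "{p,q,t}\<in>E \<and> {p,r,t}\<in>E"
        by (rule P4[OF nok c3 vE' m' dd gL[OF m'(1)] gN[OF _ m'(1)] gN[OF _ m'(2)]]) (use dd in auto)
      hence "contains_C35 E {v,q,p,t,r}" using C5[OF m'] dd by simp
      thus ?thesis by blast
    qed
  qed
qed

lemma core2:
  assumes nok: "\<not> berge_K4 E" and c3: "\<forall>e\<in>E. card e = 3"
    and vE: "\<forall>e\<in>E. v\<in>e \<longrightarrow> e=e1 \<or> e=e2 \<or> e=e3" and m: "e1\<in>E" "e2\<in>E" "e3\<in>E"
    and dE: "distinct [e1,e2,e3]" and v2: "v\<in>e2" and v3: "v\<in>e3"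
    and goodL: "\<forall>p q. {v,p,q}\<in>E \<longrightarrow> good_pair E p q"
    and goodN: "\<forall>k. k\<noteq>v \<and> (\<exists>e\<in>E. v\<in>e \<and> k\<in>e) \<longrightarrow> good_pair E v k"
    and e1: "e1 = {v,p,q}" and d1: "distinct [v,p,q]" and q2: "q\<in>e2"
  shows "\<exists>v2 v3 v4 v5. contains_C35 E {v,v2,v3,v4,v5}"
proof -
  obtain x y where xy: "e2 = {v,x,y}" "distinct [v,x,y]"
    using card3_split[of e2 v] c3 m(2) v2 by blast
  obtain r where e2: "e2 = {v,q,r}" "distinct [v,q,r]"
  proof (cases "q = x")
    case True thus thesis using that[of y] xy by simp
  next
    case False
    hence "q = y" using xy q2 d1 by auto
    moreover have "{v,x,y} = {v,y,x}" by auto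
    ultimately show thesis using that[of x] xy by auto
  qed
  have rp: "r \<noteq> p"
  proof
    assume "r = p"
    hence "e2 = e1" using e1 e2 by auto
    thus False using dE by simp
  qed
  have d: "distinct [v,p,q,r]" using d1 e2(2) rp by auto
  obtain s t where e3: "e3 = {v,s,t}" "distinct [v,s,t]"
    using card3_split[of e3 v] c3 m(3) v3 by blast
  have gN: "good_pair E v k" if "k\<noteq>v" "X\<in>E" "v\<in>X" "k\<in>X" for k X
    using goodN that by blast
  have gL: "good_pair E x y" if "{v,x,y}\<in>E" for x y using goodL that by blast
  have q3: "q \<notin> e3"
  proof
    assume "q\<in>e3"
    have all: "\<forall>e\<in>E. v\<in>e \<longrightarrow> q\<in>e"
    proof (intro ballI impI)
      fix e assume "e\<in>E" "v\<in>e"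
      hence "e=e1 \<or> e=e2 \<or> e=e3" using vE by blast
      thus "q\<in>e" using e1 q2 \<open>q\<in>e3\<close> by auto
    qed
    have "v\<in>e1" using e1 by simp
    show False
      by (rule NoStar[OF nok c3 gN[OF _ m(1)] m dE \<open>v\<in>e1\<close> v2 v3 all]) (use d1 e1 in auto)
  qed
  have st: "s\<noteq>q" "t\<noteq>q" using q3 e3 by auto
  have m3: "{v,s,t}\<in>E" using m(3) e3 by simp
  obtain A B where AB: "A\<in>E" "B\<in>E" "A\<noteq>B" "v\<in>A" "s\<in>A" "v\<in>B" "t\<in>B"
    using NoIso[OF nok gL[OF m3] m3 e3(2)] by blast
  have A3: "A=e1 \<or> A=e2 \<or> A=e3" using vE AB(1,4) by blast
  have B3: "B=e1 \<or> B=e2 \<or> B=e3" using vE AB(2,6) by blast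
  have core: "\<exists>v2 v3 v4 v5. contains_C35 E {v,v2,v3,v4,v5}"
    if "e3 = {v,s',t'}" "distinct [v,s',t']" "t'\<noteq>q" "s' = p \<or> s' = r" for s' t'
    by (rule core3[OF nok c3 vE m goodL goodN e1 e2(1) that(1) d that(2,3,4)])
  show ?thesis
  proof (cases "A = e3")
    case False
    hence "A = e1 \<or> A = e2" using A3 by blast
    hence "s \<in> e1 \<or> s \<in> e2" using AB by auto
    hence "s = p \<or> s = r" using e1 e2 e3(2) st by auto
    thus ?thesis using core[OF e3 st(2)] by blast
  next
    case True
    hence "B = e1 \<or> B = e2" using B3 AB(3) by blast
    hence "t \<in> e1 \<or> t \<in> e2" using AB by auto
    hence tt: "t = p \<or> t = r" using e1 e2 e3(2) st by auto
    have "e3 = {v,t,s}" "distinct [v,t,s]" using e3 by auto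
    thus ?thesis using core[OF _ _ st(1) tt] by blast
  qed
qed

lemma core1:
  assumes nok: "\<not> berge_K4 E" and c3: "\<forall>e\<in>E. card e = 3"
    and vE: "\<forall>e\<in>E. v\<in>e \<longrightarrow> e=e1 \<or> e=e2 \<or> e=e3" and m: "e1\<in>E" "e2\<in>E" "e3\<in>E"
    and dE: "distinct [e1,e2,e3]" and v1: "v\<in>e1" and v2: "v\<in>e2" and v3: "v\<in>e3"
    and goodL: "\<forall>p q. {v,p,q}\<in>E \<longrightarrow> good_pair E p q"
    and goodN: "\<forall>k. k\<noteq>v \<and> (\<exists>e\<in>E. v\<in>e \<and> k\<in>e) \<longrightarrow> good_pair E v k"
  shows "\<exists>v2 v3 v4 v5. contains_C35 E {v,v2,v3,v4,v5}"
proof -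
  obtain p q where e1: "e1 = {v,p,q}" "distinct [v,p,q]"
    using card3_split[of e1 v] c3 m(1) v1 by blast
  have m1: "{v,p,q}\<in>E" using m(1) e1 by simp
  have gL: "good_pair E x y" if "{v,x,y}\<in>E" for x y using goodL that by blast
  obtain A B where AB: "A\<in>E" "B\<in>E" "A\<noteq>B" "v\<in>A" "p\<in>A" "v\<in>B" "q\<in>B"
    using NoIso[OF nok gL[OF m1] m1 e1(2)] by blast
  have vE': "\<forall>e\<in>E. v\<in>e \<longrightarrow> e=e1 \<or> e=e3 \<or> e=e2" using vE by blast
  have dE': "distinct [e1,e3,e2]" using dE by auto
  have e1': "e1 = {v,q,p}" "distinct [v,q,p]" using e1 by auto
  have A3: "A=e1 \<or> A=e2 \<or> A=e3" using vE AB(1,4) by blast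
  have B3: "B=e1 \<or> B=e2 \<or> B=e3" using vE AB(2,6) by blast
  show ?thesis
  proof (cases "A = e1")
    case False
    hence "A = e2 \<or> A = e3" using A3 by blast
    thus ?thesis
    proof
      assume "A = e2"
      hence "p\<in>e2" using AB by simp
      thus ?thesis by (rule core2[OF nok c3 vE m dE v2 v3 goodL goodN e1'])
    next
      assume "A = e3"
      hence "p\<in>e3" using AB by simp
      thus ?thesis by (rule core2[OF nok c3 vE' m(1,3,2) dE' v3 v2 goodL goodN e1'])
    qed
  next
    case True
    hence "B = e2 \<or> B = e3" using B3 AB(3) by blast
    thus ?thesis
    proof
      assume "B = e2"
      hence "q\<in>e2" using AB by simp
      thus ?thesis by (rule core2[OF nok c3 vE m dE v2 v3 goodL goodN e1])
    next
      assume "B = e3"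
      hence "q\<in>e3" using AB by simp
      thus ?thesis by (rule core2[OF nok c3 vE' m(1,3,2) dE' v3 v2 goodL goodN e1])
    qed
  qed
qed

theorem lemma3p2:
  fixes V :: "'a set" and E :: "'a set set" and n :: nat and v1 :: 'a
  assumes "n \<ge> 5" and "card V = n"
    and "berge_K4_saturated V E"
    and "\<forall>(V' :: 'a set) E'. card V' = n \<and> berge_K4_saturated V' E' \<longrightarrow> card E \<le> card E'"
    and "v1 \<in> V" and "hdeg E v1 = 3"
    and "\<forall>(vi, vj) \<in> link_pairs E v1. good_pair E vi vj"
    and "\<forall>vk \<in> hneighbors E v1. good_pair E v1 vk"
  shows "\<exists>v2 v3 v4 v5. contains_C35 E {v1, v2, v3, v4, v5}"
proof -
  have nok: "\<not> berge_K4 E" using assms(3) unfolding berge_K4_saturated_def by simp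
  have c3: "\<forall>e\<in>E. card e = 3" using assms(3) unfolding berge_K4_saturated_def three_graph_def by simp
  have "card {e\<in>E. v1\<in>e} = 3" using assms(6) unfolding hdeg_def .
  then obtain e1 e2 e3 where S: "{e\<in>E. v1\<in>e} = {e1,e2,e3}" "e1\<noteq>e2" "e2\<noteq>e3" "e1\<noteq>e3"
    unfolding card_3_iff by blast
  have m: "e1\<in>E" "e2\<in>E" "e3\<in>E" "v1\<in>e1" "v1\<in>e2" "v1\<in>e3" using S(1) by blast+
  have vE: "\<forall>e\<in>E. v1\<in>e \<longrightarrow> e=e1 \<or> e=e2 \<or> e=e3" using S(1) by blast
  have dE: "distinct [e1,e2,e3]" using S by simp
  have goodL: "\<forall>p q. {v1,p,q}\<in>E \<longrightarrow> good_pair E p q"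
  proof (intro allI impI)
    fix p q assume "{v1,p,q}\<in>E"
    hence "(p,q) \<in> link_pairs E v1" unfolding link_pairs_def by simp
    thus "good_pair E p q" using assms(7) by blast
  qed
  have goodN: "\<forall>k. k\<noteq>v1 \<and> (\<exists>e\<in>E. v1\<in>e \<and> k\<in>e) \<longrightarrow> good_pair E v1 k"
  proof (intro allI impI)
    fix k assume "k\<noteq>v1 \<and> (\<exists>e\<in>E. v1\<in>e \<and> k\<in>e)"
    hence "k \<in> hneighbors E v1" unfolding hneighbors_def by simp
    thus "good_pair E v1 k" using assms(8) by blast
  qed
  show ?thesis by (rule core1[OF nok c3 vE m(1-3) dE m(4-6) goodL goodN])
qed

end
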